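(* Let $n=2k$ with $k\ge 2$. Then $\{a_i,c_i : i=1,\ldots,n\}\cup\{d_{i'} : i'=1,\ldots,k\}$ is a strong resolving set of $U_n$.
   Context: For $n\ge 3$, $U_n$ is the graph with vertex set $\{a_i,b_i,c_i,d_i,e_i : 1\le i\le n\}$ and edge set $\{a_ia_{i+1}, b_ib_{i+1}, e_ie_{i+1}, a_ib_i, b_ic_i, c_id_i, d_ie_i, c_{i+1}d_i : 1\le i\le n\}$, indices taken modulo $n$. $d$ is the graph distance. A vertex $w$ strongly resolves distinct vertices $u,v$ if $d(v,w)=d(v,u)+d(u,w)$ or $d(u,w)=d(u,v)+d(v,w)$. A set $S$ is a strong resolving set if every two distinct vertices are strongly resolved by some vertex of $S$. *)

theory Defs
  imports Main
begin

datatype vtx = A nat | B nat | C nat | D nat | E nat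

text \<open>Vertices of U_n; paper index i in 1..n corresponds to i-1 in 0..n-1.\<close>
fun idx :: "vtx \<Rightarrow> nat" where
  "idx (A i) = i" | "idx (B i) = i" | "idx (C i) = i" | "idx (D i) = i" | "idx (E i) = i"

definition U_verts :: "nat \<Rightarrow> vtx set" where
  "U_verts n = {v. idx v < n}"

definition U_edge0 :: "nat \<Rightarrow> vtx \<Rightarrow> vtx \<Rightarrow> bool" where
  "U_edge0 n u v \<longleftrightarrow> (\<exists>i<n.
      (u = A i \<and> v = A (Suc i mod n)) \<or>
      (u = B i \<and> v = B (Suc i mod n)) \<or>
      (u = E i \<and> v = E (Suc i mod n)) \<or>
      (u = A i \<and> v = B i) \<or>
      (u = B i \<and> v = C i) \<or>
      (u = C i \<and> v = D i) \<or>
      (u = D i \<and> v = E i) \<or>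
      (u = C (Suc i mod n) \<and> v = D i))"

definition U_adj :: "nat \<Rightarrow> vtx \<Rightarrow> vtx \<Rightarrow> bool" where
  "U_adj n u v \<longleftrightarrow> U_edge0 n u v \<or> U_edge0 n v u"

definition is_walk :: "('a \<Rightarrow> 'a \<Rightarrow> bool) \<Rightarrow> 'a list \<Rightarrow> bool" where
  "is_walk adj ps \<longleftrightarrow> ps \<noteq> [] \<and> (\<forall>j < length ps - 1. adj (ps ! j) (ps ! Suc j))"

definition gdist :: "('a \<Rightarrow> 'a \<Rightarrow> bool) \<Rightarrow> 'a \<Rightarrow> 'a \<Rightarrow> nat" where
  "gdist adj u v = (LEAST k. \<exists>ps. is_walk adj ps \<and> hd ps = u \<and> last ps = v \<and> length ps = Suc k)"

definition strongly_resolves :: "('a \<Rightarrow> 'a \<Rightarrow> bool) \<Rightarrow> 'a \<Rightarrow> 'a \<Rightarrow> 'a \<Rightarrow> bool" where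
  "strongly_resolves adj w u v \<longleftrightarrow>
     gdist adj v w = gdist adj v u + gdist adj u w \<or> gdist adj u w = gdist adj u v + gdist adj v w"

definition strong_resolving_set :: "'a set \<Rightarrow> ('a \<Rightarrow> 'a \<Rightarrow> bool) \<Rightarrow> 'a set \<Rightarrow> bool" where
  "strong_resolving_set V adj S \<longleftrightarrow> S \<subseteq> V \<and>
     (\<forall>u\<in>V. \<forall>v\<in>V. u \<noteq> v \<longrightarrow> (\<exists>w\<in>S. strongly_resolves adj w u v))"

end

theory Submission
  imports Defs
begin


inductive wk :: "('a \<Rightarrow> 'a \<Rightarrow> bool) \<Rightarrow> 'a \<Rightarrow> 'a \<Rightarrow> nat \<Rightarrow> bool" for adj where
  wk0: "wk adj u u 0"
| wkS: "adj u v \<Longrightarrow> wk adj v w m \<Longrightarrow> wk adj u w (Suc m)"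

lemma is_walk_Cons:
  assumes "ps \<noteq> []"
  shows "is_walk adj (u # ps) \<longleftrightarrow> adj u (hd ps) \<and> is_walk adj ps"
proof
  assume h: "is_walk adj (u # ps)"
  have all: "\<forall>j<length (u#ps) - 1. adj ((u#ps)!j) ((u#ps)! Suc j)" using h unfolding is_walk_def by blast
  have "0 < length (u#ps) - 1" using assms by simp
  from all[rule_format, OF this] have "adj ((u # ps) ! 0) ((u # ps) ! Suc 0)" .
  then have "adj u (hd ps)" using assms by (simp add: hd_conv_nth)
  moreover have "is_walk adj ps" unfolding is_walk_def
  proof (intro conjI allI impI)
    fix j assume "j < length ps - 1"
    then have "Suc j < length (u # ps) - 1" by simp
    then have "adj ((u # ps) ! Suc j) ((u # ps) ! Suc (Suc j))" using h unfolding is_walk_def by blast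
    then show "adj (ps ! j) (ps ! Suc j)" by simp
  qed (rule assms)
  ultimately show "adj u (hd ps) \<and> is_walk adj ps" by simp
next
  assume h: "adj u (hd ps) \<and> is_walk adj ps"
  show "is_walk adj (u # ps)" unfolding is_walk_def
  proof (intro conjI allI impI)
    fix j assume j: "j < length (u # ps) - 1"
    show "adj ((u # ps) ! j) ((u # ps) ! Suc j)"
    proof (cases j)
      case 0 then show ?thesis using h assms by (simp add: hd_conv_nth)
    next
      case (Suc j') then show ?thesis using h j unfolding is_walk_def by auto
    qed
  qed simp
qed

lemma wk_imp_walk: "wk adj u v m \<Longrightarrow> \<exists>ps. is_walk adj ps \<and> hd ps = u \<and> last ps = v \<and> length ps = Suc m"
proof (induction rule: wk.induct)
  case (wk0 u) then show ?case by (intro exI[of _ "[u]"]) (simp add: is_walk_def)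
next
  case (wkS u v w m)
  then obtain ps where ps: "is_walk adj ps" "hd ps = v" "last ps = w" "length ps = Suc m" by blast
  then have ne: "ps \<noteq> []" by auto
  show ?case using ps ne wkS(1) by (intro exI[of _ "u # ps"]) (simp add: is_walk_Cons)
qed

lemma walk_imp_wk: "is_walk adj ps \<Longrightarrow> wk adj (hd ps) (last ps) (length ps - 1)"
proof (induction ps)
  case Nil then show ?case by (simp add: is_walk_def)
next
  case (Cons x xs)
  show ?case
  proof (cases "xs = []")
    case True then show ?thesis by (simp add: wk0)
  next
    case False
    with Cons.prems have "adj x (hd xs)" "is_walk adj xs" by (simp_all add: is_walk_Cons)
    with Cons.IH have "wk adj (hd xs) (last xs) (length xs - 1)" by simp
    then have "wk adj x (last xs) (Suc (length xs - 1))" using \<open>adj x (hd xs)\<close> by (rule wkS[rotated])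
    then show ?thesis using False by simp
  qed
qed

lemma wk_iff: "wk adj u v m \<longleftrightarrow> (\<exists>ps. is_walk adj ps \<and> hd ps = u \<and> last ps = v \<and> length ps = Suc m)"
proof
  assume "wk adj u v m" then show "\<exists>ps. is_walk adj ps \<and> hd ps = u \<and> last ps = v \<and> length ps = Suc m"
    by (rule wk_imp_walk)
next
  assume "\<exists>ps. is_walk adj ps \<and> hd ps = u \<and> last ps = v \<and> length ps = Suc m"
  then obtain ps where ps: "is_walk adj ps" "hd ps = u" "last ps = v" "length ps = Suc m" by blast
  from walk_imp_wk[OF ps(1)] ps(2-4) show "wk adj u v m" by simp
qed

lemma gdist_wk: "gdist adj u v = (LEAST m. wk adj u v m)"
  unfolding gdist_def wk_iff ..

lemma wk_trans: "wk adj u v a \<Longrightarrow> wk adj v w b \<Longrightarrow> wk adj u w (a + b)"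
proof (induction rule: wk.induct)
  case (wk0 u) then show ?case by simp
next
  case (wkS x y z m)
  have "wk adj x w (Suc (m + b))" by (rule wk.wkS[OF wkS.hyps(1) wkS.IH[OF wkS.prems]])
  then show ?case by simp
qed

lemma wk_edge: "adj u v \<Longrightarrow> wk adj u v 1"
  using wkS[OF _ wk0] by simp

lemma wk_sym:
  assumes sym: "\<And>x y. adj x y \<Longrightarrow> adj y x"
  shows "wk adj u v a \<Longrightarrow> wk adj v u a"
proof (induction rule: wk.induct)
  case (wk0 u) then show ?case by (rule wk.wk0)
next
  case (wkS u v w m)
  have vu: "adj v u" using sym wkS.hyps(1) by blast
  have "wk adj w u (m + 1)" using wk_trans[OF wkS.IH wk_edge[of adj v u, OF vu]] .
  then show ?case by simp
qed

lemma wk_lip: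
  assumes lip: "\<And>x y. adj x y \<Longrightarrow> F x \<le> F y + 1 \<and> F y \<le> F x + 1"
  shows "wk adj u v m \<Longrightarrow> F v \<le> F u + m \<and> F u \<le> F v + (m::nat)"
proof (induction rule: wk.induct)
  case (wk0 u) then show ?case by simp
next
  case (wkS u v w m) then show ?case using lip[OF wkS.hyps(1)] by linarith
qed

lemma gdist_le: "wk adj u v m \<Longrightarrow> gdist adj u v \<le> m"
  unfolding gdist_wk by (rule Least_le)

lemma gdist_wk_self: "wk adj u v m \<Longrightarrow> wk adj u v (gdist adj u v)"
  unfolding gdist_wk by (rule LeastI)

lemma gdist_refl: "gdist adj u u = 0"
  using gdist_le[OF wk0, of adj u] by simp

lemma cert:
  assumes sym: "\<And>x y. adj x y \<Longrightarrow> adj y x"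
    and lip: "\<And>x y. adj x y \<Longrightarrow> F x \<le> F y + 1 \<and> F y \<le> F x + 1"
    and h1: "wk adj v u a" and h2: "wk adj u w b" and hF: "F w + a + b \<le> (F v :: nat)"
  shows "gdist adj v w = gdist adj v u + gdist adj u w"
proof -
  have d1: "wk adj v u (gdist adj v u)" by (rule gdist_wk_self[OF h1])
  have d2: "wk adj u w (gdist adj u w)" by (rule gdist_wk_self[OF h2])
  have "wk adj v w (gdist adj v u + gdist adj u w)" by (rule wk_trans[OF d1 d2])
  then have up: "gdist adj v w \<le> gdist adj v u + gdist adj u w" by (rule gdist_le)
  have "wk adj v w (gdist adj v w)" using gdist_wk_self[OF wk_trans[OF h1 h2]] .
  from wk_lip[of adj F, OF lip this] have "F v \<le> F w + gdist adj v w" by (rule conjunct2)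
  moreover have "gdist adj v u \<le> a" "gdist adj u w \<le> b" using gdist_le[OF h1] gdist_le[OF h2] by auto
  ultimately show ?thesis using up hF by linarith
qed

lemma sr_triv1: "strongly_resolves adj u u v"
  unfolding strongly_resolves_def by (simp add: gdist_refl)
lemma sr_triv2: "strongly_resolves adj v u v"
  unfolding strongly_resolves_def by (simp add: gdist_refl)
lemma sr_sym: "strongly_resolves adj w u v = strongly_resolves adj w v u"
  unfolding strongly_resolves_def by auto


definition mm :: "nat \<Rightarrow> nat \<Rightarrow> nat" where "mm n t = min t (n - t)"
definition cd :: "nat \<Rightarrow> nat \<Rightarrow> nat \<Rightarrow> nat" where "cd n x y = mm n ((x + n - y) mod n)"

lemma mm_flip: "t \<le> n \<Longrightarrow> mm n (n - t) = mm n t"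
  unfolding mm_def by (simp add: min.commute)

lemma cd_self: "cd n x x = 0" unfolding cd_def mm_def by simp

lemma rot_lt: "(x::nat) < y \<Longrightarrow> y < n \<Longrightarrow> (x + n - y) mod n = n - (y - x)"
proof -
  assume a: "x < y" "y < n"
  then have "x + n - y = n - (y - x)" by arith
  moreover have "n - (y - x) < n" using a by simp
  ultimately show ?thesis by simp
qed

lemma rot_ge: "(y::nat) \<le> x \<Longrightarrow> x < n \<Longrightarrow> (x + n - y) mod n = x - y"
proof -
  assume a: "y \<le> x" "x < n"
  then have e: "x + n - y = (x - y) + n" by arith
  then have "(x + n - y) mod n = ((x - y) + n) mod n" by (simp only:)
  also have "\<dots> = x - y" using a by (metis mod_add_self2 mod_less less_imp_diff_less)
  finally show ?thesis .
qed

lemma cd_lt: "x < y \<Longrightarrow> y < n \<Longrightarrow> cd n x y = mm n (y - x)"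
proof -
  assume a: "x < y" "y < n"
  have r: "(x + n - y) mod n = n - (y - x)" using a by (rule rot_lt)
  have "mm n (n - (y - x)) = mm n (y - x)" using a by (intro mm_flip) simp
  then show ?thesis unfolding cd_def r .
qed

lemma cd_ge: "y \<le> x \<Longrightarrow> x < n \<Longrightarrow> cd n x y = mm n (x - y)"
  unfolding cd_def by (subst rot_ge) simp_all

lemma cd_sym: "x < n \<Longrightarrow> y < n \<Longrightarrow> cd n x y = cd n y x"
  by (metis cd_lt cd_ge cd_self linorder_neqE_nat less_imp_le)


lemma rt_int: "int ((x + n - y) mod n) = (int x - int y) mod int n" if "y < n" for x y n :: nat
proof -
  have "int (x + n - y) = int x - int y + int n" using that by simp
  then show ?thesis by (simp add: of_nat_mod)
qed

lemma rt_Suc1: "(Suc x mod n + n - y) mod n = Suc ((x + n - y) mod n) mod n" if "y < n" for x y n :: nat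
proof -
  have "int ((Suc x mod n + n - y) mod n) = (int (Suc x mod n) - int y) mod int n" by (rule rt_int[OF that])
  also have "\<dots> = ((int x + 1) mod int n - int y) mod int n" by (simp add: of_nat_mod add.commute)
  also have "\<dots> = (int x + 1 - int y) mod int n" by (simp add: mod_diff_left_eq)
  also have "\<dots> = ((int x - int y) + 1) mod int n" by (simp add: algebra_simps)
  also have "\<dots> = ((int x - int y) mod int n + 1) mod int n" by (simp only: mod_add_left_eq)
  also have "\<dots> = (int ((x + n - y) mod n) + 1) mod int n" by (simp only: rt_int[OF that])
  also have "\<dots> = int (Suc ((x + n - y) mod n) mod n)" by (simp add: of_nat_mod add.commute)
  finally show ?thesis by (simp only: of_nat_eq_iff)
qed

lemma rt_shift: "(Suc x mod n + n - Suc y mod n) mod n = (x + n - y) mod n" if "y < n" for x y n :: nat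
proof -
  have n: "0 < n" using that by simp
  have "int ((Suc x mod n + n - Suc y mod n) mod n) = (int (Suc x mod n) - int (Suc y mod n)) mod int n"
    by (rule rt_int) (simp add: n)
  also have "\<dots> = ((int x + 1) mod int n - (int y + 1) mod int n) mod int n" by (simp add: of_nat_mod add.commute)
  also have "\<dots> = (int x + 1 - (int y + 1)) mod int n" by (simp add: mod_diff_eq)
  also have "\<dots> = (int x - int y) mod int n" by simp
  also have "\<dots> = int ((x + n - y) mod n)" by (simp only: rt_int[OF that])
  finally show ?thesis by (simp only: of_nat_eq_iff)
qed

lemma rt_Suc2: "Suc ((x + n - Suc y mod n) mod n) mod n = (x + n - y) mod n" if "y < n" for x y n :: nat
proof -
  have n: "0 < n" using that by simp
  have sy: "Suc y mod n < n" using n by simp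
  have "int (Suc ((x + n - Suc y mod n) mod n) mod n) = (int ((x + n - Suc y mod n) mod n) + 1) mod int n"
    by (simp add: of_nat_mod add.commute)
  also have "\<dots> = ((int x - int (Suc y mod n)) mod int n + 1) mod int n" by (simp only: rt_int[OF sy])
  also have "\<dots> = ((int x - (int y + 1) mod int n) mod int n + 1) mod int n" by (simp add: of_nat_mod add.commute)
  also have "\<dots> = (int x - (int y + 1) + 1) mod int n" by (simp add: mod_simps)
  also have "\<dots> = (int x - int y) mod int n" by simp
  also have "\<dots> = int ((x + n - y) mod n)" by (simp only: rt_int[OF that])
  finally show ?thesis by (simp only: of_nat_eq_iff)
qed


lemma Suc_mod_cases: "x < n \<Longrightarrow> (Suc x mod n = Suc x \<and> Suc x < n) \<or> (Suc x mod n = 0 \<and> x = n - 1)"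
  by (metis Suc_lessI diff_Suc_1 mod_less mod_self)

lemma mm_step: "t < n \<Longrightarrow> mm n (Suc t mod n) \<le> mm n t + 1 \<and> mm n t \<le> mm n (Suc t mod n) + 1"
proof -
  assume t: "t < n"
  show ?thesis
  proof (cases "Suc t < n")
    case True then show ?thesis unfolding mm_def by (simp add: min_def; arith)
  next
    case False then have st: "Suc t = n" using t by simp
    then have "t = n - 1" "Suc t mod n = 0" by auto
    then show ?thesis unfolding mm_def by (simp add: min_def; arith)
  qed
qed

lemma mm_le: "n = 2 * k \<Longrightarrow> mm n t \<le> k" unfolding mm_def by simp

lemma mm_eqk: "n = 2 * k \<Longrightarrow> t < n \<Longrightarrow> mm n t = k \<Longrightarrow> t = k" unfolding mm_def by (simp add: min_def split: if_splits)

lemma mm_anti: assumes "n = 2 * k" "t < n" "s < n" "Suc s mod n = t"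
  shows "mm n t \<le> mm n (Suc t mod n) \<or> mm n t \<le> mm n s \<or> mm n t = k"
proof (cases "Suc t < n")
  case True
  show ?thesis
  proof (cases "Suc s < n")
    case True2: True
    then have "t = Suc s" using assms by simp
    then show ?thesis using True assms unfolding mm_def by (simp add: min_def; arith)
  next
    case False
    then have "t = 0" using assms by (metis Suc_mod_cases)
    then show ?thesis unfolding mm_def by simp
  qed
next
  case False
  then have st: "Suc t = n" using assms(2) by simp
  then have "t = n - 1" "Suc t mod n = 0" by auto
  have n2: "n \<ge> 2" using assms by simp
  have "Suc s < n"
  proof (rule ccontr)
    assume "\<not> Suc s < n"
    then have "Suc s = n" using assms(3) by simp
    then have "t = 0" using assms(4) by simp
    then show False using \<open>t = n - 1\<close> n2 by simp
  qed
  then have "s = n - 2" using assms(4) \<open>t = n - 1\<close> by simp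
  then show ?thesis using \<open>t = n - 1\<close> assms unfolding mm_def by (simp add: min_def; arith)
qed


lemma cd_step: assumes "x < n" "y < n"
  shows "cd n (Suc x mod n) y \<le> cd n x y + 1 \<and> cd n x y \<le> cd n (Suc x mod n) y + 1"
proof -
  have "(x + n - y) mod n < n" using assms by simp
  from mm_step[OF this] show ?thesis unfolding cd_def rt_Suc1[OF assms(2)] .
qed

lemma cd_step2: assumes "x < n" "y < n"
  shows "cd n x (Suc y mod n) \<le> cd n x y + 1 \<and> cd n x y \<le> cd n x (Suc y mod n) + 1"
proof -
  have s: "Suc y mod n < n" using assms by simp
  show ?thesis using cd_step[OF assms(2,1)] cd_sym[OF assms] cd_sym[OF assms(1) s] by simp
qed

lemma cd_shift: assumes "x < n" "y < n" shows "cd n (Suc x mod n) (Suc y mod n) = cd n x y"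
  unfolding cd_def rt_shift[OF assms(2)] ..

lemma cd_le: "n = 2 * k \<Longrightarrow> cd n x y \<le> k"
  unfolding cd_def by (rule mm_le)

lemma cd_nonanti: assumes "n = 2 * k" "x < n" "y < n" shows
   "cd n x y \<le> cd n (Suc x mod n) y \<or> cd n x y \<le> cd n x (Suc y mod n) \<or> cd n x y = k"
proof -
  have t: "(x + n - y) mod n < n" "(x + n - Suc y mod n) mod n < n" using assms by simp_all
  from mm_anti[OF assms(1) t rt_Suc2[OF assms(3)]] show ?thesis
    unfolding cd_def rt_Suc1[OF assms(3)] .
qed

lemma cd_anti: assumes "n = 2 * k" "x < n" "y < n" "cd n x y = k" shows "x = y + k \<or> y = x + k"
proof (cases "x < y")
  case True
  then have "mm n (y - x) = k" using assms cd_lt by simp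
  then have "y - x = k" using mm_eqk[OF assms(1)] assms by simp
  then show ?thesis using True by arith
next
  case False
  then have "mm n (x - y) = k" using assms cd_ge by simp
  then have "x - y = k" using mm_eqk[OF assms(1)] assms by simp
  then show ?thesis using False by arith
qed



lemma U_adj_sym: "U_adj n x y \<Longrightarrow> U_adj n y x"
  unfolding U_adj_def by blast

lemma adjAA: "i < n \<Longrightarrow> U_adj n (A i) (A (Suc i mod n))" unfolding U_adj_def U_edge0_def by blast
lemma adjBB: "i < n \<Longrightarrow> U_adj n (B i) (B (Suc i mod n))" unfolding U_adj_def U_edge0_def by blast
lemma adjEE: "i < n \<Longrightarrow> U_adj n (E i) (E (Suc i mod n))" unfolding U_adj_def U_edge0_def by blast
lemma adjAB: "i < n \<Longrightarrow> U_adj n (A i) (B i)" unfolding U_adj_def U_edge0_def by blast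
lemma adjBC: "i < n \<Longrightarrow> U_adj n (B i) (C i)" unfolding U_adj_def U_edge0_def by blast
lemma adjCD: "i < n \<Longrightarrow> U_adj n (C i) (D i)" unfolding U_adj_def U_edge0_def by blast
lemma adjDE: "i < n \<Longrightarrow> U_adj n (D i) (E i)" unfolding U_adj_def U_edge0_def by blast
lemma adjCD2: "i < n \<Longrightarrow> U_adj n (C (Suc i mod n)) (D i)" unfolding U_adj_def U_edge0_def by blast

lemmas wkUsym = wk_sym[of "U_adj n", OF U_adj_sym] for n

lemma cyc_fwd:
  assumes "\<And>i. i < n \<Longrightarrow> U_adj n (X i) (X (Suc i mod n))" and "i < n"
  shows "wk (U_adj n) (X i) (X ((i + t) mod n)) t"
proof (induction t)
  case 0 then show ?case using assms(2) by (simp add: wk0)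
next
  case (Suc t)
  have "n > 0" using assms(2) by simp
  have e: "U_adj n (X ((i + t) mod n)) (X (Suc ((i + t) mod n) mod n))" using assms(1) \<open>n > 0\<close> by simp
  have "Suc ((i + t) mod n) mod n = (i + Suc t) mod n" by (simp add: mod_Suc_eq)
  then show ?case using wk_trans[OF Suc.IH wk_edge[where adj="U_adj n", OF e]] by simp
qed

lemma cyc_walk:
  assumes "\<And>i. i < n \<Longrightarrow> U_adj n (X i) (X (Suc i mod n))" and "i < n" and "j < n"
  shows "wk (U_adj n) (X i) (X j) (cd n i j)"
proof -
  have main: "wk (U_adj n) (X a) (X b) (cd n a b)" if ab: "a \<le> b" "b < n" for a b
  proof -
    have w1: "wk (U_adj n) (X a) (X b) (b - a)" using cyc_fwd[where n=n and X=X, OF assms(1), of a "b - a"] ab by simp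
    have "wk (U_adj n) (X b) (X ((b + (n - (b - a))) mod n)) (n - (b - a))" by (rule cyc_fwd[where n=n and X=X and i=b, OF assms(1) ab(2)])
    moreover have "(b + (n - (b - a))) mod n = a" using ab by simp
    ultimately have w2: "wk (U_adj n) (X a) (X b) (n - (b - a))" using wkUsym by fastforce
    show ?thesis
    proof (cases "a = b")
      case True then show ?thesis using w1 by (simp add: cd_self)
    next
      case False
      then have "cd n a b = min (b - a) (n - (b - a))" using ab cd_lt[of a b n] unfolding mm_def by simp
      then have "cd n a b = b - a \<or> cd n a b = n - (b - a)" by (metis min_def)
      then show ?thesis using w1 w2 by metis
    qed
  qed
  show ?thesis
  proof (cases "i \<le> j")
    case True then show ?thesis using main assms by simp
  next
    case False
    then have "wk (U_adj n) (X j) (X i) (cd n j i)" using main[of j i] assms by simp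
    then show ?thesis using wkUsym cd_sym[OF assms(2,3)] by metis
  qed
qed

lemma walkA: "i < n \<Longrightarrow> j < n \<Longrightarrow> wk (U_adj n) (A i) (A j) (cd n i j)"
  by (rule cyc_walk[where X=A]) (simp_all add: adjAA)
lemma walkB: "i < n \<Longrightarrow> j < n \<Longrightarrow> wk (U_adj n) (B i) (B j) (cd n i j)"
  by (rule cyc_walk[where X=B]) (simp_all add: adjBB)
lemma walkE: "i < n \<Longrightarrow> j < n \<Longrightarrow> wk (U_adj n) (E i) (E j) (cd n i j)"
  by (rule cyc_walk[where X=E]) (simp_all add: adjEE)



definition lipF :: "nat \<Rightarrow> (vtx \<Rightarrow> nat) \<Rightarrow> bool" where
  "lipF n F \<longleftrightarrow> (\<forall>x y. U_adj n x y \<longrightarrow> F x \<le> F y + 1 \<and> F y \<le> F x + 1)"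

lemma lipF_intro:
  assumes "\<And>x y. U_edge0 n x y \<Longrightarrow> F x \<le> F y + 1 \<and> F y \<le> F x + 1"
  shows "lipF n F"
  unfolding lipF_def U_adj_def using assms by blast


definition FA :: "nat \<Rightarrow> nat \<Rightarrow> vtx \<Rightarrow> nat" where
  "FA n m v = (case v of A i \<Rightarrow> cd n i m | B i \<Rightarrow> 1 + cd n i m | C i \<Rightarrow> 2 + cd n i m
     | D i \<Rightarrow> 3 + min (cd n i m) (cd n (Suc i mod n) m) | E i \<Rightarrow> 4 + min (cd n i m) (cd n (Suc i mod n) m))"

definition FC :: "nat \<Rightarrow> nat \<Rightarrow> vtx \<Rightarrow> nat" where
  "FC n m v = (case v of A i \<Rightarrow> 2 + cd n i m | B i \<Rightarrow> 1 + cd n i m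
     | C i \<Rightarrow> min (2 * cd n i m) (2 + cd n i m)
     | D i \<Rightarrow> min (1 + 2 * min (cd n i m) (cd n (Suc i mod n) m)) (3 + min (cd n i m) (cd n (Suc i mod n) m))
     | E i \<Rightarrow> 2 + min (cd n i m) (cd n (Suc i mod n) m))"

definition FD :: "nat \<Rightarrow> nat \<Rightarrow> vtx \<Rightarrow> nat" where
  "FD n m v = (case v of D i \<Rightarrow> min (2 * cd n i m) (2 + cd n i m) | E i \<Rightarrow> 1 + cd n i m
     | C i \<Rightarrow> min (1 + 2 * min (cd n i m) (cd n i (Suc m mod n))) (3 + min (cd n i m) (cd n i (Suc m mod n)))
     | B i \<Rightarrow> 2 + min (cd n i m) (cd n i (Suc m mod n))
     | A i \<Rightarrow> 3 + min (cd n i m) (cd n i (Suc m mod n)))"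

lemma lipFA: assumes "m < n" shows "lipF n (FA n m)"
proof (rule lipF_intro)
  fix x y assume "U_edge0 n x y"
  then obtain i where i: "i < n" and cs: "(x = A i \<and> y = A (Suc i mod n)) \<or>
      (x = B i \<and> y = B (Suc i mod n)) \<or> (x = E i \<and> y = E (Suc i mod n)) \<or>
      (x = A i \<and> y = B i) \<or> (x = B i \<and> y = C i) \<or> (x = C i \<and> y = D i) \<or>
      (x = D i \<and> y = E i) \<or> (x = C (Suc i mod n) \<and> y = D i)" unfolding U_edge0_def by blast
  have i1: "Suc i mod n < n" using i by simp
  note s1 = cd_step[OF i assms] and s2 = cd_step[OF i1 assms]
  from cs show "FA n m x \<le> FA n m y + 1 \<and> FA n m y \<le> FA n m x + 1"
    using s1 s2 by (elim disjE) (auto simp: FA_def min_def)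
qed

lemma lipFC: assumes "m < n" shows "lipF n (FC n m)"
proof (rule lipF_intro)
  fix x y assume "U_edge0 n x y"
  then obtain i where i: "i < n" and cs: "(x = A i \<and> y = A (Suc i mod n)) \<or>
      (x = B i \<and> y = B (Suc i mod n)) \<or> (x = E i \<and> y = E (Suc i mod n)) \<or>
      (x = A i \<and> y = B i) \<or> (x = B i \<and> y = C i) \<or> (x = C i \<and> y = D i) \<or>
      (x = D i \<and> y = E i) \<or> (x = C (Suc i mod n) \<and> y = D i)" unfolding U_edge0_def by blast
  have i1: "Suc i mod n < n" using i by simp
  note s1 = cd_step[OF i assms] and s2 = cd_step[OF i1 assms]
  from cs show "FC n m x \<le> FC n m y + 1 \<and> FC n m y \<le> FC n m x + 1"
    using s1 s2 by (elim disjE) (auto simp: FC_def min_def)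
qed

lemma lipFD: assumes "m < n" shows "lipF n (FD n m)"
proof (rule lipF_intro)
  fix x y assume "U_edge0 n x y"
  then obtain i where i: "i < n" and cs: "(x = A i \<and> y = A (Suc i mod n)) \<or>
      (x = B i \<and> y = B (Suc i mod n)) \<or> (x = E i \<and> y = E (Suc i mod n)) \<or>
      (x = A i \<and> y = B i) \<or> (x = B i \<and> y = C i) \<or> (x = C i \<and> y = D i) \<or>
      (x = D i \<and> y = E i) \<or> (x = C (Suc i mod n) \<and> y = D i)" unfolding U_edge0_def by blast
  have i1: "Suc i mod n < n" using i by simp
  have m1: "Suc m mod n < n" using assms by simp
  note s1 = cd_step[OF i assms] and s2 = cd_step[OF i1 assms] and s3 = cd_step2[OF i assms]
    and s4 = cd_step2[OF i1 assms] and sh = cd_shift[OF i assms] and s5 = cd_step[OF i m1]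
  from cs show "FD n m x \<le> FD n m y + 1 \<and> FD n m y \<le> FD n m x + 1"
    using s1 s2 s3 s4 s5 sh by (elim disjE) (auto simp: FD_def min_def)
qed



lemma wk_eq: "wk adj x y m \<Longrightarrow> m = m' \<Longrightarrow> wk adj x y m'" by (simp add: eval_nat_numeral)

lemma e1: "U_adj n x y \<Longrightarrow> wk (U_adj n) x y 1" by (rule wk_edge)
lemma e2: "U_adj n x y \<Longrightarrow> wk (U_adj n) y x 1" by (rule wk_edge, rule U_adj_sym)

lemma certU:
  assumes "lipF n F" "wk (U_adj n) v u a" "wk (U_adj n) u w b" "F w + a + b \<le> F v"
  shows "strongly_resolves (U_adj n) w u v"
proof -
  have "gdist (U_adj n) v w = gdist (U_adj n) v u + gdist (U_adj n) u w"
    using cert[OF U_adj_sym _ assms(2,3,4)] assms(1) unfolding lipF_def by blast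
  then show ?thesis unfolding strongly_resolves_def by (simp add: eval_nat_numeral)
qed

lemma wDB: "i < n \<Longrightarrow> j < n \<Longrightarrow> wk (U_adj n) (D j) (B i) (2 + cd n j i)"
  using wk_trans[OF wk_trans[OF e2[OF adjCD] e2[OF adjBC]] walkB[of j n i]] by (simp add: eval_nat_numeral)

lemma wDB2: "i < n \<Longrightarrow> j < n \<Longrightarrow> wk (U_adj n) (D j) (B i) (2 + cd n (Suc j mod n) i)"
proof -
  assume a: "i < n" "j < n"
  have s: "Suc j mod n < n" using a by (simp add: eval_nat_numeral)
  show ?thesis using wk_trans[OF wk_trans[OF e2[OF adjCD2[OF a(2)]] e2[OF adjBC[OF s]]] walkB[OF s a(1)]] by (simp add: eval_nat_numeral)
qed

lemma wDBm: "i < n \<Longrightarrow> j < n \<Longrightarrow> wk (U_adj n) (D j) (B i) (2 + min (cd n j i) (cd n (Suc j mod n) i))"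
  using wDB wDB2 by (cases "cd n j i \<le> cd n (Suc j mod n) i") (simp_all add: min_def)

lemma wEBm: "i < n \<Longrightarrow> j < n \<Longrightarrow> wk (U_adj n) (E j) (B i) (3 + min (cd n j i) (cd n (Suc j mod n) i))"
  using wk_trans[OF e2[OF adjDE] wDBm[of i n j]] by (simp add: eval_nat_numeral)

lemma wEA: "i < n \<Longrightarrow> wk (U_adj n) (E i) (A i) 4"
  using wk_trans[OF wk_trans[OF e2[OF adjDE] e2[OF adjCD]] wk_trans[OF e2[OF adjBC] e2[OF adjAB]]] by (simp add: eval_nat_numeral)

lemma wEA2: "i < n \<Longrightarrow> wk (U_adj n) (E i) (A (Suc i mod n)) 4"
proof -
  assume a: "i < n"
  have s: "Suc i mod n < n" using a by (simp add: eval_nat_numeral)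
  show ?thesis using wk_trans[OF wk_trans[OF e2[OF adjDE[OF a]] e2[OF adjCD2[OF a]]]
        wk_trans[OF e2[OF adjBC[OF s]] e2[OF adjAB[OF s]]]] by (simp add: eval_nat_numeral)
qed

lemma wDA: "j < n \<Longrightarrow> wk (U_adj n) (D j) (A j) 3"
  using wk_trans[OF e2[OF adjCD] wk_trans[OF e2[OF adjBC] e2[OF adjAB]]] by (simp add: eval_nat_numeral)

lemma wDA2: "j < n \<Longrightarrow> wk (U_adj n) (D j) (A (Suc j mod n)) 3"
proof -
  assume a: "j < n"
  have s: "Suc j mod n < n" using a by (simp add: eval_nat_numeral)
  show ?thesis using wk_trans[OF e2[OF adjCD2[OF a]] wk_trans[OF e2[OF adjBC[OF s]] e2[OF adjAB[OF s]]]] by (simp add: eval_nat_numeral)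
qed

lemma wED: "i < n \<Longrightarrow> j < n \<Longrightarrow> wk (U_adj n) (E i) (D j) (1 + cd n i j)"
  using wk_trans[OF walkE[of i n j] e2[OF adjDE[of j n]]] by (simp add: eval_nat_numeral)



definition SS :: "nat \<Rightarrow> nat \<Rightarrow> vtx set" where
  "SS n k = {A i | i. i < n} \<union> {C i | i. i < n} \<union> {D i | i. i < k}"

lemma L_B: assumes i: "i < n" and j: "j < n" and y: "y = B j \<or> y = D j \<or> y = E j"
  shows "strongly_resolves (U_adj n) (A i) (B i) y"
proof -
  have F0: "FA n i (A i) = 0" by (simp add: FA_def cd_self)
  from y show ?thesis
  proof (elim disjE)
    assume "y = B j"
    then show ?thesis using certU[OF lipFA[OF i] walkB[OF j i] e2[OF adjAB[OF i]]] F0 by (simp add: FA_def)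
  next
    assume "y = D j"
    then show ?thesis using certU[OF lipFA[OF i] wDBm[OF i j] e2[OF adjAB[OF i]]] F0 by (simp add: FA_def)
  next
    assume "y = E j"
    then show ?thesis using certU[OF lipFA[OF i] wEBm[OF i j] e2[OF adjAB[OF i]]] F0 by (simp add: FA_def)
  qed
qed

lemma L_EE: assumes nk: "n = 2 * k" and i: "i < n" and j: "j < n"
  shows "\<exists>w\<in>SS n k. strongly_resolves (U_adj n) w (E i) (E j)"
proof -
  have si: "Suc i mod n < n" using i by simp
  from cd_nonanti[OF nk j i] show ?thesis
  proof (elim disjE)
    assume c: "cd n j i \<le> cd n (Suc j mod n) i"
    have "strongly_resolves (U_adj n) (A i) (E i) (E j)"
      using certU[OF lipFA[OF i] walkE[OF j i] wEA[OF i]] c by (simp add: FA_def cd_self)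
    moreover have "A i \<in> SS n k" using i by (simp add: SS_def)
    ultimately show ?thesis by blast
  next
    assume c: "cd n j i \<le> cd n j (Suc i mod n)"
    have "strongly_resolves (U_adj n) (A (Suc i mod n)) (E i) (E j)"
      using certU[OF lipFA[OF si] walkE[OF j i] wEA2[OF i]] c cd_shift[OF j i] by (simp add: FA_def cd_self)
    moreover have "A (Suc i mod n) \<in> SS n k" using si by (simp add: SS_def)
    ultimately show ?thesis by blast
  next
    assume c: "cd n j i = k"
    from cd_anti[OF nk j i c] show ?thesis
    proof
      assume "j = i + k"
      then have ik: "i < k" using j nk by simp
      have "strongly_resolves (U_adj n) (D i) (E i) (E j)"
        using certU[OF lipFD[OF i] walkE[OF j i] e2[OF adjDE[OF i]]] c by (simp add: FD_def cd_self)
      moreover have "D i \<in> SS n k" using ik by (simp add: SS_def)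
      ultimately show ?thesis by blast
    next
      assume "i = j + k"
      then have jk: "j < k" using i nk by simp
      have c': "cd n i j = k" using c cd_sym[OF i j] by simp
      have "strongly_resolves (U_adj n) (D j) (E j) (E i)"
        using certU[OF lipFD[OF j] walkE[OF i j] e2[OF adjDE[OF j]]] c' by (simp add: FD_def cd_self)
      then have "strongly_resolves (U_adj n) (D j) (E i) (E j)" by (simp add: sr_sym)
      moreover have "D j \<in> SS n k" using jk by (simp add: SS_def)
      ultimately show ?thesis by blast
    qed
  qed
qed

lemma L_ED: assumes nk: "n = 2 * k" and k2: "k \<ge> 2" and i: "i < n" and j: "j < n"
  shows "\<exists>w\<in>SS n k. strongly_resolves (U_adj n) w (E i) (D j)"
proof -
  have sj: "Suc j mod n < n" using j by simp
  from cd_nonanti[OF nk i j] show ?thesis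
  proof (elim disjE)
    assume c: "cd n i j \<le> cd n (Suc i mod n) j"
    have "strongly_resolves (U_adj n) (A j) (D j) (E i)"
      using certU[OF lipFA[OF j] wED[OF i j] wDA[OF j]] c by (simp add: FA_def cd_self)
    then have "strongly_resolves (U_adj n) (A j) (E i) (D j)" by (simp add: sr_sym)
    moreover have "A j \<in> SS n k" using j by (simp add: SS_def)
    ultimately show ?thesis by blast
  next
    assume c: "cd n i j \<le> cd n i (Suc j mod n)"
    have "strongly_resolves (U_adj n) (A (Suc j mod n)) (D j) (E i)"
      using certU[OF lipFA[OF sj] wED[OF i j] wDA2[OF j]] c cd_shift[OF i j] by (simp add: FA_def cd_self)
    then have "strongly_resolves (U_adj n) (A (Suc j mod n)) (E i) (D j)" by (simp add: sr_sym)
    moreover have "A (Suc j mod n) \<in> SS n k" using sj by (simp add: SS_def)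
    ultimately show ?thesis by blast
  next
    assume c: "cd n i j = k"
    from cd_anti[OF nk i j c] show ?thesis
    proof
      assume "i = j + k"
      then have jk: "j < k" using i nk by simp
      have "strongly_resolves (U_adj n) (D j) (E i) (D j)" by (rule sr_triv2)
      moreover have "D j \<in> SS n k" using jk by (simp add: SS_def)
      ultimately show ?thesis by blast
    next
      assume "j = i + k"
      then have ik: "i < k" using j nk by simp
      have c': "cd n j i = k" using c cd_sym[OF i j] by simp
      have w: "wk (U_adj n) (D j) (E i) (1 + cd n j i)"
        using wk_trans[OF e1[OF adjDE[OF j]] walkE[OF j i]] .
      have "strongly_resolves (U_adj n) (D i) (E i) (D j)"
        using certU[OF lipFD[OF i] w e2[OF adjDE[OF i]]] c' k2 by (simp add: FD_def cd_self)
      moreover have "D i \<in> SS n k" using ik by (simp add: SS_def)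
      ultimately show ?thesis by blast
    qed
  qed
qed

lemma L_DD: assumes nk: "n = 2 * k" and ki: "k \<le> i" and ij: "i < j" and j: "j < n"
  shows "strongly_resolves (U_adj n) (C i) (D i) (D j)"
proof -
  have i: "i < n" using ij j by simp
  define t where "t = j - i"
  have t: "0 < t" "t < k" using ij j nk ki unfolding t_def by simp_all
  have c1: "cd n j i = t" using cd_ge[of i j n] ij j t nk unfolding t_def mm_def by simp
  have c2: "cd n (Suc j mod n) i = Suc t"
  proof (cases "Suc j < n")
    case True
    then have "cd n (Suc j mod n) i = mm n (Suc j - i)" using cd_ge[of i "Suc j" n] ij by simp
    then show ?thesis using t ij nk True unfolding t_def mm_def by simp
  next
    case False
    then have "Suc j = n" using j by simp
    then have "Suc j mod n = 0" by simp
    moreover have "cd n 0 i = mm n i" using cd_lt[of 0 i n] i t ki by simp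
    ultimately have "cd n (Suc j mod n) i = n - i" using nk ki unfolding mm_def by simp
    then show ?thesis using \<open>Suc j = n\<close> ij unfolding t_def by simp
  qed
  have FDj: "FC n i (D j) = min (1 + 2 * t) (3 + t)" using c1 c2 by (simp add: FC_def)
  have FCi: "FC n i (C i) = 0" by (simp add: FC_def cd_self)
  show ?thesis
  proof (cases "t = 1")
    case True
    then have jj: "Suc i mod n = j" using j unfolding t_def by simp
    have w: "wk (U_adj n) (D j) (D i) 2"
    proof -
      have e: "wk (U_adj n) (C j) (D i) 1" using e1[OF adjCD2[OF i]] jj by simp
      show ?thesis using wk_trans[OF e2[OF adjCD[OF j]] e] by (simp add: eval_nat_numeral)
    qed
    show ?thesis using certU[OF lipFC[OF i] w e2[OF adjCD[OF i]]] FDj FCi True by simp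
  next
    case False
    have w: "wk (U_adj n) (D j) (D i) (1 + cd n j i + 1)"
      using wk_trans[OF wk_trans[OF e1[OF adjDE[OF j]] walkE[OF j i]] e2[OF adjDE[OF i]]] .
    show ?thesis using certU[OF lipFC[OF i] w e2[OF adjCD[OF i]]] FDj FCi False t c1 by simp
  qed
qed



lemma sr_same: "strongly_resolves adj w u u"
  unfolding strongly_resolves_def by (simp add: gdist_refl)

lemma main_pair: assumes nk: "n = 2 * k" and k2: "k \<ge> 2" and u: "idx u < n" and v: "idx v < n"
  shows "\<exists>w\<in>SS n k. strongly_resolves (U_adj n) w u v"
proof (cases "u \<in> SS n k")
  case True show ?thesis by (rule bexI[OF sr_triv1 True])
next
  case nu: False
  show ?thesis
  proof (cases "v \<in> SS n k")
    case True show ?thesis by (rule bexI[OF sr_triv2 True])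
  next
    case nv: False
    have symc: "\<exists>w\<in>SS n k. strongly_resolves (U_adj n) w u v"
      if "\<exists>w\<in>SS n k. strongly_resolves (U_adj n) w v u"
    proof -
      from that obtain w where "w \<in> SS n k" "strongly_resolves (U_adj n) w v u" by blast
      then show ?thesis using sr_sym[of "U_adj n" w v u] by blast
    qed
    have Bcase: "\<exists>w\<in>SS n k. strongly_resolves (U_adj n) w (B i) y"
      if hb: "i < n" "idx y < n" "y \<notin> SS n k" for i y
    proof -
      obtain j where j: "j < n" "y = B j \<or> y = D j \<or> y = E j"
        using hb(2,3) nk by (cases y) (auto simp: SS_def)
      have "strongly_resolves (U_adj n) (A i) (B i) y" by (rule L_B[OF hb(1) j])
      moreover have "A i \<in> SS n k" using hb(1) by (simp add: SS_def)
      ultimately show ?thesis by blast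
    qed
    show ?thesis
    proof (cases u)
      case (A i) then show ?thesis using nu u by (simp add: SS_def)
    next
      case (C i) then show ?thesis using nu u by (simp add: SS_def)
    next
      case (B i)
      have "\<exists>w\<in>SS n k. strongly_resolves (U_adj n) w (B i) v" by (rule Bcase) (use B u v nv in simp_all)
      then show ?thesis using B by simp
    next
      case (D i)
      note Du = D
      then have ik: "k \<le> i" "i < n" using nu u by (auto simp: SS_def)
      show ?thesis
      proof (cases v)
        case (A j) then show ?thesis using nv v by (simp add: SS_def)
      next
        case (C j) then show ?thesis using nv v by (simp add: SS_def)
      next
        case (B j)
        have "\<exists>w\<in>SS n k. strongly_resolves (U_adj n) w (B j) u" by (rule Bcase) (use B u v nu in simp_all)
        then show ?thesis using B symc by simp
      next
        case (E j)
        have "\<exists>w\<in>SS n k. strongly_resolves (U_adj n) w (E j) (D i)" by (rule L_ED[OF nk k2]) (use E v ik in simp_all)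
        then show ?thesis using E Du symc by simp
      next
        case (D j)
        note Dv = D
        then have jk: "k \<le> j" "j < n" using nv v by (auto simp: SS_def)
        have Ci: "C i \<in> SS n k" using ik by (simp add: SS_def)
        have Cj: "C j \<in> SS n k" using jk by (simp add: SS_def)
        consider "i < j" | "i = j" | "j < i" by arith
        then show ?thesis
        proof cases
          case 1
          have "strongly_resolves (U_adj n) (C i) (D i) (D j)" by (rule L_DD[OF nk ik(1) 1 jk(2)])
          then show ?thesis using Du Dv by (intro bexI[OF _ Ci]) simp
        next
          case 2
          have "strongly_resolves (U_adj n) (C i) u v" using Du Dv 2 by (simp add: sr_same)
          then show ?thesis by (rule bexI[OF _ Ci])
        next
          case 3
          then have "strongly_resolves (U_adj n) (C j) (D j) (D i)" using L_DD[OF nk jk(1) 3 ik(2)] by simp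
          then have "strongly_resolves (U_adj n) (C j) u v" using Du Dv by (simp add: sr_sym)
          then show ?thesis by (rule bexI[OF _ Cj])
        qed
      qed
    next
      case (E i)
      note Eu = E
      show ?thesis
      proof (cases v)
        case (A j) then show ?thesis using nv v by (simp add: SS_def)
      next
        case (C j) then show ?thesis using nv v by (simp add: SS_def)
      next
        case (B j)
        have "\<exists>w\<in>SS n k. strongly_resolves (U_adj n) w (B j) u" by (rule Bcase) (use B u v nu in simp_all)
        then show ?thesis using B symc by simp
      next
        case (D j)
        have "\<exists>w\<in>SS n k. strongly_resolves (U_adj n) w (E i) (D j)" by (rule L_ED[OF nk k2]) (use Eu D u v in simp_all)
        then show ?thesis using Eu D by simp
      next
        case (E j)
        have "\<exists>w\<in>SS n k. strongly_resolves (U_adj n) w (E i) (E j)" by (rule L_EE[OF nk]) (use Eu E u v in simp_all)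
        then show ?thesis using Eu E by simp
      qed
    qed
  qed
qed

theorem lemma4p8:
  fixes n k :: nat
  assumes "n = 2 * k" and "k \<ge> 2"
  shows "strong_resolving_set (U_verts n) (U_adj n)
           ({A i | i. i < n} \<union> {C i | i. i < n} \<union> {D i | i. i < k})"
proof -
  have Seq: "{A i | i. i < n} \<union> {C i | i. i < n} \<union> {D i | i. i < k} = SS n k" by (simp add: SS_def)
  show ?thesis unfolding strong_resolving_set_def Seq
  proof (intro conjI ballI impI)
    show "SS n k \<subseteq> U_verts n" using assms by (auto simp: SS_def U_verts_def)
  next
    fix u v assume "u \<in> U_verts n" "v \<in> U_verts n" "u \<noteq> v"
    then show "\<exists>w\<in>SS n k. strongly_resolves (U_adj n) w u v"
      using main_pair[OF assms] by (simp add: U_verts_def)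
  qed
qed


end
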